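(* Let $(R,\mathfrak{m})$ be a finite commutative local ring with identity whose maximal ideal $\mathfrak{m}$ is a principal ideal, and let $I$ be an ideal of $R$. Then $\Gamma''_I(R)$ is a planar graph.
   Context: For a commutative ring $R$ and an ideal $I$ of $R$, $\Gamma''_I(R)$ is the simple undirected graph whose vertex set is $\{x\in R\setminus I : xR+I\neq R\}$, and two distinct vertices $x,y$ are adjacent if and only if $x\notin yR+I$ and $y\notin xR+I$. A graph is planar if it can be drawn in the plane with edges meeting only at their endpoints. *)

theory Defs
  imports "HOL-Algebra.Algebra" "HOL-Analysis.Analysis"
begin

definition local_ring :: "('a, 'b) ring_scheme \<Rightarrow> bool" where
  "local_ring R \<longleftrightarrow> cring R \<and> (\<exists>!m. maximalideal m R)"

definition gamma2_vertices :: "('a, 'b) ring_scheme \<Rightarrow> 'a set \<Rightarrow> 'a set" where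
  "gamma2_vertices R I =
     {x \<in> carrier R - I. (PIdl\<^bsub>R\<^esub> x) <+>\<^bsub>R\<^esub> I \<noteq> carrier R}"

definition gamma2_edges :: "('a, 'b) ring_scheme \<Rightarrow> 'a set \<Rightarrow> 'a set set" where
  "gamma2_edges R I =
     {{x, y} | x y. x \<in> gamma2_vertices R I \<and> y \<in> gamma2_vertices R I \<and> x \<noteq> y \<and>
        x \<notin> (PIdl\<^bsub>R\<^esub> y) <+>\<^bsub>R\<^esub> I \<and> y \<notin> (PIdl\<^bsub>R\<^esub> x) <+>\<^bsub>R\<^esub> I}"

definition planar_graph :: "'v set \<Rightarrow> 'v set set \<Rightarrow> bool" where
  "planar_graph V E \<longleftrightarrow>
     (\<exists>(f :: 'v \<Rightarrow> complex) (g :: 'v set \<Rightarrow> real \<Rightarrow> complex).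
        inj_on f V \<and>
        (\<forall>e\<in>E. arc (g e) \<and> {pathstart (g e), pathfinish (g e)} = f ` e \<and>
                 path_image (g e) \<inter> f ` V = f ` e) \<and>
        (\<forall>e\<in>E. \<forall>e'\<in>E. e \<noteq> e' \<longrightarrow> path_image (g e) \<inter> path_image (g e') = f ` (e \<inter> e')))"

end

theory Submission
  imports Defs
begin

lemma (in cring) exists_maximal_above:
  assumes fin: "finite (carrier R)"
  shows "ideal K R \<Longrightarrow> K \<noteq> carrier R \<Longrightarrow> \<exists>M. maximalideal M R \<and> K \<subseteq> M"
proof (induction "card (carrier R) - card K" arbitrary: K rule: less_induct)
  case less
  show ?case
  proof (cases "maximalideal K R")
    case True then show ?thesis by blast
  next
    case False
    have Kc: "K \<subseteq> carrier R" using less.prems ideal.axioms(1) additive_subgroup.a_subset by blast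
    have "\<not> (\<forall>J. ideal J R \<and> K \<subseteq> J \<and> J \<subseteq> carrier R \<longrightarrow> J = K \<or> J = carrier R)"
      using False maximalidealI[OF less.prems(1)] less.prems(2) by metis
    then obtain J where J: "ideal J R" "K \<subseteq> J" "J \<subseteq> carrier R" "J \<noteq> K" "J \<noteq> carrier R" by blast
    have "K \<subset> J" using J by blast
    then have "card K < card J" using J fin by (meson psubset_card_mono finite_subset)
    moreover have "card J \<le> card (carrier R)" using J fin card_mono by blast
    ultimately have "card (carrier R) - card J < card (carrier R) - card K" by linarith
    from less.hyps[OF this J(1) J(5)] J(2) show ?thesis by blast
  qed
qed

lemma (in cring) nonunit_in_maximal:
  assumes fin: "finite (carrier R)" and x: "x \<in> carrier R" and nu: "x \<notin> Units R"
  shows "\<exists>M. maximalideal M R \<and> x \<in> M"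
proof -
  have "PIdl x \<noteq> carrier R"
  proof
    assume "PIdl x = carrier R"
    then have "\<one> \<in> PIdl x" by simp
    then obtain y where "y \<in> carrier R" "\<one> = y \<otimes> x" unfolding cgenideal_def by blast
    then have "x \<in> Units R" using x m_comm unfolding Units_def by auto
    with nu show False by simp
  qed
  from exists_maximal_above[OF fin cgenideal_ideal[OF x] this]
  show ?thesis using cgenideal_self[OF x] by blast
qed

lemma (in cring) chain_principal:
  assumes fin: "finite (carrier R)"
    and m: "maximalideal m R" and uniq: "\<And>M. maximalideal M R \<Longrightarrow> M = m"
    and a: "a \<in> carrier R" and ma: "m = PIdl a"
  shows "x \<in> carrier R \<Longrightarrow> y \<in> carrier R \<Longrightarrow> x \<in> PIdl y \<or> y \<in> PIdl x"
proof -
  have unit: "z \<in> Units R" if "z \<in> carrier R" "z \<notin> m" for z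
    using nonunit_in_maximal[OF fin that(1)] uniq that(2) by blast
  have one_not: "\<one> \<notin> m"
    using m maximalideal.I_notcarr ideal.one_imp_carrier maximalideal.axioms(1) by metis
  have mc: "m \<subseteq> carrier R" using m maximalideal.axioms(1) ideal.axioms(1) additive_subgroup.a_subset by blast
  have PIdlc: "PIdl z \<subseteq> carrier R" if "z \<in> carrier R" for z
    unfolding cgenideal_def using that by auto
  have step: "card (PIdl x) < card (PIdl x')"
    if xc: "x' \<in> carrier R" and xe: "x = x' \<otimes> a" and x0: "x \<noteq> \<zero>" for x x'
  proof -
    have xcar: "x \<in> carrier R" using xe xc a by simp
    have sub: "PIdl x \<subseteq> PIdl x'"
      by (rule cgenideal_minimal[OF cgenideal_ideal[OF xc]])
        (auto simp: cgenideal_def xe intro!: exI[of _ a] a xc m_comm)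
    have "PIdl x \<noteq> PIdl x'"
    proof
      assume eq: "PIdl x = PIdl x'"
      then have "x' \<in> PIdl x" using cgenideal_self[OF xc] by simp
      then obtain r where r: "r \<in> carrier R" "x' = r \<otimes> x" unfolding cgenideal_def by blast
      have ra: "r \<otimes> a \<in> m" using r(1) a ma unfolding cgenideal_def by blast
      have "\<one> \<ominus> r \<otimes> a \<notin> m"
      proof
        assume "\<one> \<ominus> r \<otimes> a \<in> m"
        then have "(\<one> \<ominus> r \<otimes> a) \<oplus> r \<otimes> a \<in> m"
          using ra m maximalideal.axioms(1) ideal.axioms(1) additive_subgroup.a_closed by metis
        moreover have "(\<one> \<ominus> r \<otimes> a) \<oplus> r \<otimes> a = \<one>" using r a by algebra
        ultimately show False using one_not by simp
      qed
      then have u: "\<one> \<ominus> r \<otimes> a \<in> Units R" using unit r a by simp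
      have "x' \<otimes> (\<one> \<ominus> r \<otimes> a) = \<zero>" using r xe xc a by algebra
      moreover have "x' = (x' \<otimes> (\<one> \<ominus> r \<otimes> a)) \<otimes> inv (\<one> \<ominus> r \<otimes> a)"
        using u xc r a by (simp add: m_assoc Units_r_inv Units_closed)
      ultimately have "x' = \<zero>" using u by simp
      then show False using x0 xe a by simp
    qed
    then show ?thesis using sub fin PIdlc[OF xc] by (meson psubsetI psubset_card_mono rev_finite_subset)
  qed
  have bound: "card (PIdl z) \<le> card (carrier R)" if "z \<in> carrier R" for z
    using card_mono[OF fin PIdlc[OF that]] .
  show "x \<in> carrier R \<Longrightarrow> y \<in> carrier R \<Longrightarrow> x \<in> PIdl y \<or> y \<in> PIdl x"
  proof (induction "2 * card (carrier R) - card (PIdl x) - card (PIdl y)" arbitrary: x y rule: less_induct)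
    case less
    have zero_in: "\<zero> \<in> PIdl z" if "z \<in> carrier R" for z
      unfolding cgenideal_def using that by (auto intro!: exI[of _ \<zero>])
    show ?case
    proof (cases "x = \<zero> \<or> y = \<zero>")
      case True then show ?thesis using zero_in less.prems by blast
    next
      case nz: False
      show ?thesis
      proof (cases "x \<in> m \<and> y \<in> m")
        case False
        then have "x \<in> Units R \<or> y \<in> Units R" using unit less.prems by blast
        then show ?thesis
        proof
          assume xu: "x \<in> Units R"
          have "y = (y \<otimes> inv x) \<otimes> x" using xu less.prems
            by (simp add: m_assoc Units_l_inv)
          then show ?thesis unfolding cgenideal_def using xu less.prems by blast
        next
          assume yu: "y \<in> Units R"
          have "x = (x \<otimes> inv y) \<otimes> y" using yu less.prems
            by (simp add: m_assoc Units_l_inv)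
          then show ?thesis unfolding cgenideal_def using yu less.prems by blast
        qed
      next
        case True
        then obtain x' y' where x': "x' \<in> carrier R" "x = x' \<otimes> a"
          and y': "y' \<in> carrier R" "y = y' \<otimes> a" using ma unfolding cgenideal_def by blast
        have c1: "card (PIdl x) < card (PIdl x')" using step x' nz by blast
        have c2: "card (PIdl y) < card (PIdl y')" using step y' nz by blast
        have "2 * card (carrier R) - card (PIdl x') - card (PIdl y') <
              2 * card (carrier R) - card (PIdl x) - card (PIdl y)"
          using c1 c2 bound[OF x'(1)] bound[OF y'(1)] by linarith
        from less.hyps[OF this x'(1) y'(1)]
        show ?thesis
        proof
          assume "x' \<in> PIdl y'"
          then obtain s where "s \<in> carrier R" "x' = s \<otimes> y'" unfolding cgenideal_def by blast
          then have "x = s \<otimes> y" using x' y' a by (simp add: m_assoc)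
          then show ?thesis unfolding cgenideal_def using \<open>s \<in> carrier R\<close> by blast
        next
          assume "y' \<in> PIdl x'"
          then obtain s where "s \<in> carrier R" "y' = s \<otimes> x'" unfolding cgenideal_def by blast
          then have "y = s \<otimes> x" using x' y' a by (simp add: m_assoc)
          then show ?thesis unfolding cgenideal_def using \<open>s \<in> carrier R\<close> by blast
        qed
      qed
    qed
  qed
qed

lemma (in cring) edges_empty:
  assumes "finite (carrier R)"
    and "\<And>m. maximalideal m R \<Longrightarrow> principalideal m R"
    and "ideal I R" and ex: "\<exists>!m. maximalideal m R"
  shows "gamma2_edges R I = {}"
proof -
  obtain m where m: "maximalideal m R" and uniq: "\<And>M. maximalideal M R \<Longrightarrow> M = m" using ex by blast
  obtain a where a: "a \<in> carrier R" "m = Idl {a}"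
    using assms(2)[OF m] principalideal.generate by blast
  have ma: "m = PIdl a" using a cgenideal_eq_genideal by simp
  have zI: "\<zero> \<in> I" using assms(3) ideal.axioms(1) additive_subgroup.zero_closed by blast
  have inadd: "z \<in> PIdl w <+>\<^bsub>R\<^esub> I" if "z \<in> PIdl w" "z \<in> carrier R" for z w
  proof -
    have "z = z \<oplus> \<zero>" using that(2) by simp
    then show ?thesis unfolding set_add_def' using that(1) zI by blast
  qed
  have "False" if "x \<in> carrier R" "y \<in> carrier R" "x \<notin> PIdl y <+>\<^bsub>R\<^esub> I" "y \<notin> PIdl x <+>\<^bsub>R\<^esub> I" for x y
    using chain_principal[OF assms(1) m uniq a(1) ma that(1,2)] inadd that by blast
  then show ?thesis unfolding gamma2_edges_def gamma2_vertices_def by blast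
qed

theorem theorem3p10:
  fixes R :: "('a, 'b) ring_scheme" and I :: "'a set"
  assumes "local_ring R"
    and "finite (carrier R)"
    and "\<And>m. maximalideal m R \<Longrightarrow> principalideal m R"
    and "ideal I R"
  shows "planar_graph (gamma2_vertices R I) (gamma2_edges R I)"
proof -
  have cr: "cring R" and ex: "\<exists>!m. maximalideal m R" using assms(1) unfolding local_ring_def by auto
  have E: "gamma2_edges R I = {}" using cring.edges_empty[OF cr assms(2,3,4) ex] .
  have "finite (gamma2_vertices R I)" using assms(2) unfolding gamma2_vertices_def by auto
  then obtain h :: "'a \<Rightarrow> nat" where h: "inj_on h (gamma2_vertices R I)"
    using finite_imp_inj_to_nat_seg by blast
  have "inj_on (\<lambda>v. of_nat (h v) :: complex) (gamma2_vertices R I)"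
    using h unfolding inj_on_def by auto
  then show ?thesis unfolding planar_graph_def E by blast
qed

end
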